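(* Let $f:\{0,1\}^n\to\{0,1\}$ and consider a memoryless quantum query algorithm that computes $f$ in $T$ queries, with intermediate states $|\psi_x^t\rangle$. If $x,y\in\{0,1\}^n$ satisfy $f(x)\neq f(y)$, then $$\sum_{t=0}^{T-1}\sqrt{\sum_{i:\,x_i\neq y_i}\big\|(|i\rangle\langle i|\otimes I)|\psi_x^t\rangle\big\|^2}\ \ge\ \frac16 .$$
   Context: Let $\mathcal H$ be the $2n$-dimensional Hilbert space with orthonormal basis $\{|i,b\rangle: i\in\{1,\dots,n\}, b\in\{0,1\}\}$ (index register $i$, value register $b$). For $x\in\{0,1\}^n$ the binary oracle is $O_x|i,b\rangle=|i,b\oplus x_i\rangle$. A memoryless quantum query algorithm with query complexity $T$ is a sequence $U_0,\dots,U_T$ of unitaries on $\mathcal H$; its intermediate state after $t$ queries on input $x$ is $|\psi_x^t\rangle=U_tO_x\cdots U_1O_xU_0|\mathrm{init}\rangle$ for a fixed basis state $|\mathrm{init}\rangle$. It outputs $b$ with probability $\|(I\otimes|b\rangle\langle b|)|\psi_x^T\rangle\|^2$, and computes $f$ if for every $x$ it outputs $f(x)$ with probability at least $2/3$. *)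

theory Defs
  imports Complex_Main
begin

(* Basis states |i,b> of the 2n-dimensional space are indexed by pairs (i,b) with
  i in {0..<n} (0-based index register) and b :: bool (value register, False = 0, True = 1). *)

type_synonym idx = "nat \<times> bool"
type_synonym vec = "idx \<Rightarrow> complex"
type_synonym qop = "idx \<Rightarrow> idx \<Rightarrow> complex"

definition dom_idx :: "nat \<Rightarrow> idx set" where
  "dom_idx n = {0..<n} \<times> UNIV"

definition mat_app :: "nat \<Rightarrow> qop \<Rightarrow> vec \<Rightarrow> vec" where
  "mat_app n U v = (\<lambda>j. if j \<in> dom_idx n then (\<Sum>k\<in>dom_idx n. U j k * v k) else 0)"

definition unitary_on :: "nat \<Rightarrow> qop \<Rightarrow> bool" where
  "unitary_on n U \<longleftrightarrow> (\<forall>j\<in>dom_idx n. \<forall>l\<in>dom_idx n.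
      (\<Sum>k\<in>dom_idx n. cnj (U k j) * U k l) = (if j = l then 1 else 0))"

definition query_op :: "nat \<Rightarrow> bool list \<Rightarrow> vec \<Rightarrow> vec" where
  "query_op n x v = (\<lambda>(i,b). if i < n then v (i, b \<noteq> x ! i) else 0)"

definition basis_vec :: "idx \<Rightarrow> vec" where
  "basis_vec j = (\<lambda>k. if k = j then 1 else 0)"

primrec psi :: "nat \<Rightarrow> (nat \<Rightarrow> qop) \<Rightarrow> idx \<Rightarrow> bool list \<Rightarrow> nat \<Rightarrow> vec" where
  "psi n U init x 0 = mat_app n (U 0) (basis_vec init)"
| "psi n U init x (Suc t) = mat_app n (U (Suc t)) (query_op n x (psi n U init x t))"

definition out_prob :: "nat \<Rightarrow> (nat \<Rightarrow> qop) \<Rightarrow> nat \<Rightarrow> idx \<Rightarrow> bool list \<Rightarrow> bool \<Rightarrow> real" where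
  "out_prob n U T init x b = (\<Sum>i<n. (cmod (psi n U init x T (i, b)))\<^sup>2)"

definition computes :: "nat \<Rightarrow> (bool list \<Rightarrow> bool) \<Rightarrow> (nat \<Rightarrow> qop) \<Rightarrow> nat \<Rightarrow> idx \<Rightarrow> bool" where
  "computes n f U T init \<longleftrightarrow>
     (\<forall>t\<le>T. unitary_on n (U t)) \<and> init \<in> dom_idx n \<and>
     (\<forall>x. length x = n \<longrightarrow> out_prob n U T init x (f x) \<ge> 2/3)"

end

theory Submission
  imports Defs "HOL-Analysis.L2_Norm"
begin

definition NS :: "nat \<Rightarrow> vec \<Rightarrow> real" where
  "NS n v = (\<Sum>k\<in>dom_idx n. (cmod (v k))\<^sup>2)"

lemma fin_dom[simp]: "finite (dom_idx n)"
  by (simp add: dom_idx_def)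

lemma cmod_sq_c: "complex_of_real ((cmod z)\<^sup>2) = cnj z * z"
  by (metis complex_norm_square mult.commute of_real_power)

lemma unitary_NS:
  assumes "unitary_on n U"
  shows "NS n (mat_app n U v) = NS n v"
proof -
  let ?D = "dom_idx n"
  have "complex_of_real (NS n (mat_app n U v)) =
      (\<Sum>j\<in>?D. cnj (\<Sum>k\<in>?D. U j k * v k) * (\<Sum>l\<in>?D. U j l * v l))"
    unfolding NS_def mat_app_def of_real_sum
    by (rule sum.cong) (auto simp only: cmod_sq_c if_True)
  also have "\<dots> = (\<Sum>j\<in>?D. \<Sum>k\<in>?D. \<Sum>l\<in>?D. cnj (v k) * v l * (cnj (U j k) * U j l))"
  proof (rule sum.cong[OF refl])
    fix j
    show "cnj (\<Sum>k\<in>?D. U j k * v k) * (\<Sum>l\<in>?D. U j l * v l) =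
      (\<Sum>k\<in>?D. \<Sum>l\<in>?D. cnj (v k) * v l * (cnj (U j k) * U j l))"
      unfolding cnj_sum sum_product
      by (intro sum.cong refl) (simp add: algebra_simps)
  qed
  also have "\<dots> = (\<Sum>k\<in>?D. \<Sum>j\<in>?D. \<Sum>l\<in>?D. cnj (v k) * v l * (cnj (U j k) * U j l))"
    by (rule sum.swap)
  also have "\<dots> = (\<Sum>k\<in>?D. \<Sum>l\<in>?D. \<Sum>j\<in>?D. cnj (v k) * v l * (cnj (U j k) * U j l))"
    by (rule sum.cong[OF refl], rule sum.swap)
  also have "\<dots> = (\<Sum>k\<in>?D. \<Sum>l\<in>?D. cnj (v k) * v l * (\<Sum>j\<in>?D. cnj (U j k) * U j l))"
    by (simp only: sum_distrib_left)
  also have "\<dots> = (\<Sum>k\<in>?D. \<Sum>l\<in>?D. cnj (v k) * v l * (if k = l then 1 else 0))"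
    using assms unfolding unitary_on_def by (intro sum.cong refl) auto
  also have "\<dots> = (\<Sum>k\<in>?D. cnj (v k) * v k)"
  proof (rule sum.cong[OF refl])
    fix k assume "k \<in> ?D"
    have "(\<Sum>l\<in>?D. cnj (v k) * v l * (if k = l then 1 else 0)) =
       (\<Sum>l\<in>?D. (if k = l then cnj (v k) * v l else 0))"
      by (rule sum.cong) auto
    also have "\<dots> = cnj (v k) * v k" using \<open>k \<in> ?D\<close> by (simp add: sum.delta)
    finally show "(\<Sum>l\<in>?D. cnj (v k) * v l * (if k = l then 1 else 0)) = cnj (v k) * v k" .
  qed
  also have "\<dots> = complex_of_real (NS n v)"
    unfolding NS_def of_real_sum
    by (rule sum.cong) (auto simp only: cmod_sq_c if_True)
  finally show ?thesis using of_real_eq_iff by blast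
qed

definition L2c :: "('a \<Rightarrow> complex) \<Rightarrow> 'a set \<Rightarrow> real" where
  "L2c v I = L2_set (\<lambda>k. cmod (v k)) I"

lemma L2c_sq: "(L2c v I)\<^sup>2 = (\<Sum>k\<in>I. (cmod (v k))\<^sup>2)"
  unfolding L2c_def L2_set_def by (simp add: sum_nonneg)

lemma L2c_nonneg: "0 \<le> L2c v I"
  unfolding L2c_def by simp

lemma L2c_NS: "L2c v (dom_idx n) = sqrt (NS n v)"
  unfolding L2c_def L2_set_def NS_def by simp

lemma L2c_tri3: "L2c (\<lambda>k. a k - c k) I \<le> L2c (\<lambda>k. a k - b k) I + L2c (\<lambda>k. b k - c k) I"
proof -
  have "L2c (\<lambda>k. a k - c k) I \<le> L2_set (\<lambda>k. cmod (a k - b k) + cmod (b k - c k)) I"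
    unfolding L2c_def
    by (rule L2_set_mono) (metis diff_add_cancel add_diff_eq norm_triangle_ineq, simp)
  also have "\<dots> \<le> L2c (\<lambda>k. a k - b k) I + L2c (\<lambda>k. b k - c k) I"
    unfolding L2c_def by (rule L2_set_triangle_ineq)
  finally show ?thesis .
qed

lemma L2c_rev: "L2c v I - L2c w I \<le> L2c (\<lambda>k. v k - w k) I"
proof -
  have "L2c v I \<le> L2c (\<lambda>k. v k - w k) I + L2c (\<lambda>k. w k - 0) I"
    using L2c_tri3[of v "\<lambda>_. 0" I w] by simp
  then show ?thesis by simp
qed

lemma sum_dom: "(\<Sum>k\<in>dom_idx n. g k) = (\<Sum>i<n. g (i, True) + g (i, False))"
proof -
  have "(\<Sum>k\<in>dom_idx n. g k) = (\<Sum>i\<in>{0..<n}. \<Sum>b\<in>UNIV. g (i, b))"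
    unfolding dom_idx_def sum.cartesian_product by simp
  also have "\<dots> = (\<Sum>i<n. g (i, True) + g (i, False))"
    by (simp add: UNIV_bool lessThan_atLeast0 add.commute)
  finally show ?thesis .
qed

lemma sum_dom_b: "(\<Sum>k\<in>dom_idx n. g k) = (\<Sum>i<n. g (i, P)) + (\<Sum>i<n. g (i, \<not> P))"
  by (cases P) (simp_all add: sum_dom sum.distrib add.commute)

lemma mat_app_diff: "mat_app n U (\<lambda>k. v k - w k) = (\<lambda>j. mat_app n U v j - mat_app n U w j)"
  unfolding mat_app_def by (auto simp: sum_subtractf right_diff_distrib)

lemma query_diff: "query_op n x (\<lambda>k. v k - w k) = (\<lambda>k. query_op n x v k - query_op n x w k)"
  unfolding query_op_def by auto

lemma query_NS: "NS n (query_op n x v) = NS n v"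
  unfolding NS_def sum_dom
  apply (rule sum.cong[OF refl])
  subgoal for i by (cases "x ! i") (simp_all add: query_op_def)
  done

lemma sq_diff_le: "(cmod (a - b))\<^sup>2 \<le> 2 * ((cmod a)\<^sup>2 + (cmod b)\<^sup>2)"
proof -
  have h: "cmod (a - b) \<le> cmod a + cmod b" by (rule norm_triangle_ineq4)
  have "(cmod (a - b))\<^sup>2 \<le> (cmod a + cmod b)\<^sup>2"
    using h by (simp add: power_mono)
  also have "\<dots> \<le> 2 * ((cmod a)\<^sup>2 + (cmod b)\<^sup>2)"
    using zero_le_power2[of "cmod a - cmod b"] by (simp add: power2_eq_square algebra_simps)
  finally show ?thesis .
qed

lemma Oxy_bound:
  "NS n (\<lambda>k. query_op n x v k - query_op n y v k) \<le>
     4 * (\<Sum>i\<in>{i. i < n \<and> x ! i \<noteq> y ! i}. \<Sum>b\<in>UNIV. (cmod (v (i, b)))\<^sup>2)"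
proof -
  have set_eq: "{i. i < n \<and> x ! i \<noteq> y ! i} = {i\<in>{..<n}. x ! i \<noteq> y ! i}" by auto
  have "4 * (\<Sum>i\<in>{i. i < n \<and> x ! i \<noteq> y ! i}. \<Sum>b\<in>UNIV. (cmod (v (i, b)))\<^sup>2) =
     (\<Sum>i<n. if x ! i \<noteq> y ! i then 4 * ((cmod (v (i, True)))\<^sup>2 + (cmod (v (i, False)))\<^sup>2) else 0)"
    unfolding set_eq sum.inter_filter[OF finite_lessThan] sum_distrib_left
    by (rule sum.cong) (auto simp: UNIV_bool add.commute)
  moreover have "NS n (\<lambda>k. query_op n x v k - query_op n y v k) \<le>
     (\<Sum>i<n. if x ! i \<noteq> y ! i then 4 * ((cmod (v (i, True)))\<^sup>2 + (cmod (v (i, False)))\<^sup>2) else 0)"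
    unfolding NS_def sum_dom
  proof (rule sum_mono)
    fix i assume "i \<in> {..<n}"
    then have i: "i < n" by simp
    show "(cmod (query_op n x v (i, True) - query_op n y v (i, True)))\<^sup>2 +
          (cmod (query_op n x v (i, False) - query_op n y v (i, False)))\<^sup>2
          \<le> (if x ! i \<noteq> y ! i then 4 * ((cmod (v (i, True)))\<^sup>2 + (cmod (v (i, False)))\<^sup>2) else 0)"
    proof (cases "x ! i = y ! i")
      case True
      then show ?thesis using i by (simp add: query_op_def)
    next
      case False
      have 1: "(cmod (v (i, True) - v (i, False)))\<^sup>2 \<le> 2 * ((cmod (v (i, True)))\<^sup>2 + (cmod (v (i, False)))\<^sup>2)"
        by (rule sq_diff_le)
      have 2: "(cmod (v (i, False) - v (i, True)))\<^sup>2 \<le> 2 * ((cmod (v (i, True)))\<^sup>2 + (cmod (v (i, False)))\<^sup>2)"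
        using sq_diff_le[of "v (i, False)" "v (i, True)"] by simp
      show ?thesis using False i 1 2 by (cases "x ! i") (auto simp: query_op_def)
    qed
  qed
  ultimately show ?thesis by simp
qed

lemma NS_basis: "init \<in> dom_idx n \<Longrightarrow> NS n (basis_vec init) = 1"
proof -
  assume a: "init \<in> dom_idx n"
  have "NS n (basis_vec init) = (\<Sum>k\<in>dom_idx n. if k = init then 1 else 0)"
    unfolding NS_def basis_vec_def by (rule sum.cong) auto
  then show ?thesis using a by (simp add: sum.delta')
qed

lemma norm_one:
  assumes "computes n f U T init" "t \<le> T"
  shows "NS n (psi n U init x t) = 1"
  using assms(2)
proof (induction t)
  case 0
  then show ?case using assms(1) unfolding computes_def
    by (simp add: unitary_NS NS_basis)
next
  case (Suc t)
  then show ?case using assms(1) unfolding computes_def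
    by (simp add: unitary_NS query_NS)
qed

definition Sx :: "nat \<Rightarrow> (nat \<Rightarrow> qop) \<Rightarrow> idx \<Rightarrow> bool list \<Rightarrow> bool list \<Rightarrow> nat \<Rightarrow> real" where
  "Sx n U init x y t = (\<Sum>i\<in>{i. i < n \<and> x ! i \<noteq> y ! i}.
            \<Sum>b\<in>UNIV. (cmod (psi n U init x t (i, b)))\<^sup>2)"

lemma dist_bound:
  assumes "computes n f U T init" "t \<le> T"
  shows "L2c (\<lambda>k. psi n U init x t k - psi n U init y t k) (dom_idx n)
     \<le> 2 * (\<Sum>s<t. sqrt (Sx n U init x y s))"
  using assms(2)
proof (induction t)
  case 0
  then show ?case by (simp add: L2c_def L2_set_def)
next
  case (Suc t)
  let ?D = "dom_idx n"
  let ?a = "psi n U init x t" and ?b = "psi n U init y t"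
  have un: "unitary_on n (U (Suc t))" using assms(1) Suc.prems unfolding computes_def by simp
  have "L2c (\<lambda>k. psi n U init x (Suc t) k - psi n U init y (Suc t) k) ?D
      = L2c (\<lambda>k. query_op n x ?a k - query_op n y ?b k) ?D"
    by (simp add: L2c_NS mat_app_diff[symmetric] unitary_NS[OF un])
  also have "\<dots> \<le> L2c (\<lambda>k. query_op n x ?a k - query_op n y ?a k) ?D
      + L2c (\<lambda>k. query_op n y ?a k - query_op n y ?b k) ?D"
    by (rule L2c_tri3)
  also have "L2c (\<lambda>k. query_op n y ?a k - query_op n y ?b k) ?D
      = L2c (\<lambda>k. ?a k - ?b k) ?D"
    by (simp add: L2c_NS query_diff[symmetric] query_NS)
  also have "L2c (\<lambda>k. query_op n x ?a k - query_op n y ?a k) ?D \<le> 2 * sqrt (Sx n U init x y t)"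
  proof -
    have "L2c (\<lambda>k. query_op n x ?a k - query_op n y ?a k) ?D
        = sqrt (NS n (\<lambda>k. query_op n x ?a k - query_op n y ?a k))" by (rule L2c_NS)
    also have "\<dots> \<le> sqrt (4 * Sx n U init x y t)"
      unfolding Sx_def by (rule real_sqrt_le_mono, rule Oxy_bound)
    also have "\<dots> = 2 * sqrt (Sx n U init x y t)"
      by (simp add: real_sqrt_mult)
    finally show ?thesis .
  qed
  finally show ?case using Suc by simp
qed

lemma NS_out: "NS n v = (\<Sum>i<n. (cmod (v (i, P)))\<^sup>2) + (\<Sum>i<n. (cmod (v (i, \<not> P)))\<^sup>2)"
  unfolding NS_def by (rule sum_dom_b)

theorem corollary2p2:
  fixes n T :: nat and f :: "bool list \<Rightarrow> bool" and U :: "nat \<Rightarrow> qop" and init :: idx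
    and x y :: "bool list"
  assumes "computes n f U T init"
    and "length x = n" and "length y = n"
    and "f x \<noteq> f y"
  shows "(\<Sum>t<T. sqrt (\<Sum>i\<in>{i. i < n \<and> x ! i \<noteq> y ! i}.
            \<Sum>b\<in>UNIV. (cmod (psi n U init x t (i, b)))\<^sup>2)) \<ge> 1/6"
proof -
  define P where "P = f x"
  have fy: "f y = (\<not> P)" using assms(4) P_def by auto
  let ?px = "psi n U init x T" and ?py = "psi n U init y T"
  have ox: "out_prob n U T init x P \<ge> 2/3" using assms(1,2) P_def unfolding computes_def by auto
  have oy0: "out_prob n U T init y (f y) \<ge> 2/3" using assms(1,3) unfolding computes_def by blast
  have oy: "out_prob n U T init y (\<not> P) \<ge> 2/3" using oy0 fy by simp
  have nx: "out_prob n U T init x P + out_prob n U T init x (\<not> P) = 1"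
    using norm_one[OF assms(1), of T x] NS_out[of n ?px P] unfolding out_prob_def by simp
  have ny: "out_prob n U T init y P + out_prob n U T init y (\<not> P) = 1"
    using norm_one[OF assms(1), of T y] NS_out[of n ?py P] unfolding out_prob_def by simp
  define a where "a = L2c (\<lambda>i. ?px (i, P)) {..<n}"
  define b where "b = L2c (\<lambda>i. ?py (i, P)) {..<n}"
  define c where "c = L2c (\<lambda>i. ?px (i, \<not> P)) {..<n}"
  define d where "d = L2c (\<lambda>i. ?py (i, \<not> P)) {..<n}"
  define A where "A = L2c (\<lambda>i. ?px (i, P) - ?py (i, P)) {..<n}"
  define B where "B = L2c (\<lambda>i. ?py (i, \<not> P) - ?px (i, \<not> P)) {..<n}"
  have a2: "a\<^sup>2 = out_prob n U T init x P" unfolding a_def L2c_sq out_prob_def by simp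
  have b2: "b\<^sup>2 = out_prob n U T init y P" unfolding b_def L2c_sq out_prob_def by simp
  have c2: "c\<^sup>2 = out_prob n U T init x (\<not> P)" unfolding c_def L2c_sq out_prob_def by simp
  have d2: "d\<^sup>2 = out_prob n U T init y (\<not> P)" unfolding d_def L2c_sq out_prob_def by simp
  have abcd: "0 \<le> a" "0 \<le> b" "0 \<le> c" "0 \<le> d" unfolding a_def b_def c_def d_def
    by (simp_all add: L2c_nonneg)
  have "(0.816::real)\<^sup>2 \<le> a\<^sup>2" using a2 ox by (simp add: power2_eq_square)
  then have a1: "0.816 \<le> a" by (rule power2_le_imp_le[OF _ abcd(1)])
  have "(0.816::real)\<^sup>2 \<le> d\<^sup>2" using d2 oy by (simp add: power2_eq_square)
  then have d1: "0.816 \<le> d" by (rule power2_le_imp_le[OF _ abcd(4)])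
  have "b\<^sup>2 \<le> (0.578::real)\<^sup>2" using b2 ny oy by (simp add: power2_eq_square)
  then have b1: "b \<le> 0.578" by (rule power2_le_imp_le) auto
  have "c\<^sup>2 \<le> (0.578::real)\<^sup>2" using c2 nx ox by (simp add: power2_eq_square)
  then have c1: "c \<le> 0.578" by (rule power2_le_imp_le) auto
  have A1: "a - b \<le> A" unfolding a_def b_def A_def by (rule L2c_rev)
  have B1: "d - c \<le> B" unfolding c_def d_def B_def by (rule L2c_rev)
  have "(0.238::real) \<le> A" using A1 a1 b1 by linarith
  then have "(0.238::real)\<^sup>2 \<le> A\<^sup>2" by (rule power_mono) simp
  moreover have "(0.238::real) \<le> B" using B1 c1 d1 by linarith
  then have "(0.238::real)\<^sup>2 \<le> B\<^sup>2" by (rule power_mono) simp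
  moreover have "(L2c (\<lambda>k. ?px k - ?py k) (dom_idx n))\<^sup>2 = A\<^sup>2 + B\<^sup>2"
    unfolding A_def B_def L2c_sq sum_dom_b[of _ _ P]
    by (simp add: norm_minus_commute)
  ultimately have "(1/3::real)\<^sup>2 \<le> (L2c (\<lambda>k. ?px k - ?py k) (dom_idx n))\<^sup>2"
    by (simp add: power2_eq_square)
  then have "1/3 \<le> L2c (\<lambda>k. ?px k - ?py k) (dom_idx n)"
    by (rule power2_le_imp_le) (auto simp: L2c_nonneg)
  also have "\<dots> \<le> 2 * (\<Sum>s<T. sqrt (Sx n U init x y s))"
    by (rule dist_bound[OF assms(1) order_refl])
  finally show ?thesis unfolding Sx_def by simp
qed

end
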